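(* Let $f(X)=N(N-1)\sum_{i=1}^{\ell}\beta_i\,t(H_i,X)$ be a subgraph-counting function. Then for every $X\in\{0,1\}^n$ and every index $j\in[n]$, $$|\partial_jf(X)|\le\sum_{i=1}^{\ell}|\beta_i|\,|E(H_i)|.$$
   Context: $n=\binom N2$; $X\in\{0,1\}^n$ is identified with a simple graph on $[N]$ (coordinates indexed by unordered pairs). For a finite simple graph $H$ on $[m]$, $t(H,X)$ is the number of injective homomorphisms $H\to X$ divided by $N(N-1)\cdots(N-m+1)$. $\partial_jf(X)=\frac12\big(f(X_1,\dots,X_{j-1},1,X_{j+1},\dots,X_n)-f(X_1,\dots,X_{j-1},0,X_{j+1},\dots,X_n)\big)$. *)

theory Defs
  imports Complex_Main "HOL-Library.FuncSet"
begin

text \<open>Unordered pairs of distinct vertices in [N] = {0..<N}; these index the n = N choose 2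
  coordinates. A vector X in {0,1}^n is identified with its edge set X \<subseteq> pairs N.\<close>
definition pairs :: "nat \<Rightarrow> nat set set" where
  "pairs N = {e. \<exists>a b. a < N \<and> b < N \<and> a \<noteq> b \<and> e = {a, b}}"

definition inj_hom_count :: "nat \<Rightarrow> nat set set \<Rightarrow> nat \<Rightarrow> nat set set \<Rightarrow> nat" where
  "inj_hom_count m E N X =
     card {\<phi> \<in> {0..<m} \<rightarrow>\<^sub>E {0..<N}. inj_on \<phi> {0..<m} \<and> (\<forall>e\<in>E. \<phi> ` e \<in> X)}"

definition hom_density :: "nat \<Rightarrow> nat set set \<Rightarrow> nat \<Rightarrow> nat set set \<Rightarrow> real" where
  "hom_density m E N X = real (inj_hom_count m E N X) / (\<Prod>k<m. (real N - real k))"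

definition subgraph_count_fun ::
  "nat \<Rightarrow> nat \<Rightarrow> (nat \<Rightarrow> nat) \<Rightarrow> (nat \<Rightarrow> nat set set) \<Rightarrow> (nat \<Rightarrow> real) \<Rightarrow> nat set set \<Rightarrow> real" where
  "subgraph_count_fun N l m E \<beta> X =
     real N * (real N - 1) * (\<Sum>i<l. \<beta> i * hom_density (m i) (E i) N X)"

definition disc_partial :: "(nat set set \<Rightarrow> real) \<Rightarrow> nat set \<Rightarrow> nat set set \<Rightarrow> real" where
  "disc_partial f e X = (f (insert e X) - f (X - {e})) / 2"

end

theory Submission imports Defs begin

lemma card_inj_funcset:
  assumes "finite S"
  shows "finite T \<Longrightarrow> real (card {f \<in> S \<rightarrow>\<^sub>E T. inj_on f S}) = (\<Prod>k<card S. (real (card T) - real k))"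
  using assms
proof (induction S arbitrary: T rule: finite_induct)
  case empty
  then show ?case by (simp add: PiE_empty_domain)
next
  case (insert x S)
  have eq: "{f \<in> insert x S \<rightarrow>\<^sub>E T. inj_on f (insert x S)} =
    (\<lambda>(y, g). g(x:=y)) ` (SIGMA y:T. {g \<in> S \<rightarrow>\<^sub>E (T - {y}). inj_on g S})"
  proof -
    have "{(y, g). y \<in> T \<and> g \<in> S \<rightarrow>\<^sub>E (T - {y}) \<and> inj_on g S} = (SIGMA y:T. {g \<in> S \<rightarrow>\<^sub>E (T - {y}). inj_on g S})"
      by blast
    then show ?thesis using extensional_funcset_extend_domain_inj_on_eq[OF insert(2), of T] by simp
  qed
  have inj: "inj_on (\<lambda>(y, g). g(x:=y)) (SIGMA y:T. {g \<in> S \<rightarrow>\<^sub>E (T - {y}). inj_on g S})"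
  proof -
    have "{(y, g). y \<in> T \<and> g \<in> S \<rightarrow>\<^sub>E (T - {y}) \<and> inj_on g S} = (SIGMA y:T. {g \<in> S \<rightarrow>\<^sub>E (T - {y}). inj_on g S})"
      by blast
    then show ?thesis using extensional_funcset_extend_domain_inj_onI[OF insert(2), of T] by simp
  qed
  have fin: "\<And>y. finite {g \<in> S \<rightarrow>\<^sub>E (T - {y}). inj_on g S}"
    using insert(1) insert(4) by (intro finite_subset[OF _ finite_PiE[of S "\<lambda>_. T - {y}" for y]]) auto
  have "real (card {f \<in> insert x S \<rightarrow>\<^sub>E T. inj_on f (insert x S)})
     = real (card (SIGMA y:T. {g \<in> S \<rightarrow>\<^sub>E (T - {y}). inj_on g S}))"
    unfolding eq using card_image[OF inj] by simp
  also have "\<dots> = (\<Sum>y\<in>T. real (card {g \<in> S \<rightarrow>\<^sub>E (T - {y}). inj_on g S}))"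
    using card_SigmaI[OF insert(4), of "\<lambda>y. {g \<in> S \<rightarrow>\<^sub>E (T - {y}). inj_on g S}"] fin by simp
  also have "\<dots> = (\<Sum>y\<in>T. (\<Prod>k<card S. (real (card T) - 1 - real k)))"
  proof (rule sum.cong[OF refl])
    fix y assume y: "y \<in> T"
    have "card (T - {y}) = card T - 1" using y insert(4) by simp
    moreover have "card T \<ge> 1" using y insert(4) by (metis One_nat_def Suc_leI card_gt_0_iff empty_iff)
    ultimately have "real (card (T - {y})) = real (card T) - 1" by simp
    then show "real (card {g \<in> S \<rightarrow>\<^sub>E (T - {y}). inj_on g S}) = (\<Prod>k<card S. (real (card T) - 1 - real k))"
      using insert(3)[of "T - {y}"] insert(4) by simp
  qed
  also have "\<dots> = real (card T) * (\<Prod>k<card S. (real (card T) - 1 - real k))" by simp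
  also have "\<dots> = (\<Prod>k<card (insert x S). (real (card T) - real k))"
  proof -
    have c: "card (insert x S) = Suc (card S)" using insert(1,2) by simp
    show ?thesis unfolding c prod.lessThan_Suc_shift by (simp add: algebra_simps)
  qed
  finally show ?case .
qed


lemma card_fix2_le:
  assumes "finite S" "finite T" "a \<in> S" "b \<in> S" "a \<noteq> b"
  shows "card {\<phi> \<in> S \<rightarrow>\<^sub>E T. inj_on \<phi> S \<and> \<phi> a = u \<and> \<phi> b = v}
     \<le> card {\<psi> \<in> (S - {a,b}) \<rightarrow>\<^sub>E (T - {u,v}). inj_on \<psi> (S - {a,b})}"
proof (rule card_inj_on_le[of "\<lambda>\<phi>. restrict \<phi> (S - {a,b})"])
  show "inj_on (\<lambda>\<phi>. restrict \<phi> (S - {a,b})) {\<phi> \<in> S \<rightarrow>\<^sub>E T. inj_on \<phi> S \<and> \<phi> a = u \<and> \<phi> b = v}"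
  proof (rule inj_onI)
    fix \<phi> \<psi> assume p: "\<phi> \<in> {\<phi> \<in> S \<rightarrow>\<^sub>E T. inj_on \<phi> S \<and> \<phi> a = u \<and> \<phi> b = v}"
      and q: "\<psi> \<in> {\<phi> \<in> S \<rightarrow>\<^sub>E T. inj_on \<phi> S \<and> \<phi> a = u \<and> \<phi> b = v}"
      and r: "restrict \<phi> (S - {a,b}) = restrict \<psi> (S - {a,b})"
    show "\<phi> = \<psi>"
    proof
      fix x
      show "\<phi> x = \<psi> x"
      proof (cases "x \<in> S")
        case True
        then show ?thesis using p q r by (cases "x = a \<or> x = b") (auto dest: fun_cong[of _ _ x])
      next
        case False
        then show ?thesis using p q by (auto simp: PiE_def extensional_def)
      qed
    qed
  qed
  show "(\<lambda>\<phi>. restrict \<phi> (S - {a,b})) ` {\<phi> \<in> S \<rightarrow>\<^sub>E T. inj_on \<phi> S \<and> \<phi> a = u \<and> \<phi> b = v}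
      \<subseteq> {\<psi> \<in> (S - {a,b}) \<rightarrow>\<^sub>E (T - {u,v}). inj_on \<psi> (S - {a,b})}"
  proof clarify
    fix \<phi> assume p: "\<phi> \<in> S \<rightarrow>\<^sub>E T" "inj_on \<phi> S" "u = \<phi> a" "v = \<phi> b"
    have "restrict \<phi> (S - {a, b}) \<in> (S - {a,b}) \<rightarrow>\<^sub>E (T - {\<phi> a, \<phi> b})"
      using p assms(3,4) by (auto simp: inj_on_def)
    moreover have "inj_on (restrict \<phi> (S - {a, b})) (S - {a,b})"
      using p(2) by (auto simp: inj_on_def)
    ultimately show "restrict \<phi> (S - {a, b}) \<in> (S - {a,b}) \<rightarrow>\<^sub>E (T - {\<phi> a, \<phi> b}) \<and>
         inj_on (restrict \<phi> (S - {a, b})) (S - {a,b})" by blast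
  qed
  show "finite {\<psi> \<in> (S - {a,b}) \<rightarrow>\<^sub>E (T - {u,v}). inj_on \<psi> (S - {a,b})}"
    using assms(1,2) by (intro finite_subset[OF _ finite_PiE[of "S - {a,b}" "\<lambda>_. T - {u,v}"]]) auto
qed

lemma card_edge_le:
  assumes "m \<ge> 2" "a < m" "b < m" "a \<noteq> b" "u < N" "v < N" "u \<noteq> v"
  shows "real (card {\<phi> \<in> {0..<m} \<rightarrow>\<^sub>E {0..<N}. inj_on \<phi> {0..<m} \<and> \<phi> ` {a,b} = {u,v}})
     \<le> 2 * (\<Prod>k<m-2. (real N - 2 - real k))"
proof -
  let ?S = "{0..<m}" and ?T = "{0..<N}"
  let ?B1 = "{\<phi> \<in> ?S \<rightarrow>\<^sub>E ?T. inj_on \<phi> ?S \<and> \<phi> a = u \<and> \<phi> b = v}"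
  let ?B2 = "{\<phi> \<in> ?S \<rightarrow>\<^sub>E ?T. inj_on \<phi> ?S \<and> \<phi> a = v \<and> \<phi> b = u}"
  let ?Q = "{\<psi> \<in> (?S - {a,b}) \<rightarrow>\<^sub>E (?T - {u,v}). inj_on \<psi> (?S - {a,b})}"
  let ?Q' = "{\<psi> \<in> (?S - {a,b}) \<rightarrow>\<^sub>E (?T - {v,u}). inj_on \<psi> (?S - {a,b})}"
  have sub: "{\<phi> \<in> ?S \<rightarrow>\<^sub>E ?T. inj_on \<phi> ?S \<and> \<phi> ` {a,b} = {u,v}} \<subseteq> ?B1 \<union> ?B2"
    using assms(7) by (auto simp: doubleton_eq_iff)
  have finB: "finite ?B1" "finite ?B2"
    by (auto intro: finite_subset[OF _ finite_PiE[of ?S "\<lambda>_. ?T"]])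
  have c1: "card ?B1 \<le> card ?Q" using card_fix2_le[of ?S ?T a b u v] assms by simp
  have c2: "card ?B2 \<le> card ?Q" using card_fix2_le[of ?S ?T a b v u] assms by (simp add: insert_commute)
  have "card {\<phi> \<in> ?S \<rightarrow>\<^sub>E ?T. inj_on \<phi> ?S \<and> \<phi> ` {a,b} = {u,v}} \<le> card (?B1 \<union> ?B2)"
    using finB by (intro card_mono[OF _ sub]) auto
  also have "\<dots> \<le> card ?B1 + card ?B2" by (rule card_Un_le)
  finally have le: "card {\<phi> \<in> ?S \<rightarrow>\<^sub>E ?T. inj_on \<phi> ?S \<and> \<phi> ` {a,b} = {u,v}} \<le> 2 * card ?Q"
    using c1 c2 by linarith
  have cS: "card (?S - {a,b}) = m - 2" using assms by (simp add: card_Diff_subset)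
  have cT: "card (?T - {u,v}) = N - 2" using assms by (simp add: card_Diff_subset)
  have N2: "N \<ge> 2" using assms by linarith
  have "real (card ?Q) = (\<Prod>k<m-2. (real N - 2 - real k))"
    using card_inj_funcset[of "?S - {a,b}" "?T - {u,v}"] cS cT N2 by (simp add: of_nat_diff)
  then show ?thesis using le by (metis (no_types, lifting) of_nat_le_iff of_nat_mult of_nat_numeral)
qed


lemma finite_pairs: "finite (pairs m)"
proof -
  have "pairs m \<subseteq> Pow {0..<m}" by (auto simp: pairs_def)
  then show ?thesis by (rule finite_subset) simp
qed

lemma prod_nonneg_or_zero:
  "(\<Prod>k<m. (real N - real k)) \<ge> 0"
proof (cases "N < m")
  case True
  have N: "N \<in> {..<m}" using True by simp
  have "(\<Prod>k<m. (real N - real k)) = 0"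
    by (rule prod_zero) (use N in auto)
  then show ?thesis by linarith
next
  case False
  then show ?thesis by (intro prod_nonneg) auto
qed

lemma graph_diff:
  assumes E: "E \<subseteq> pairs m" and e: "e \<in> pairs N"
  shows "0 \<le> real N * (real N - 1) * (hom_density m E N (insert e X) - hom_density m E N (X - {e}))
       \<and> real N * (real N - 1) * (hom_density m E N (insert e X) - hom_density m E N (X - {e}))
         \<le> 2 * real (card E)"
proof -
  define P where "P = (\<Prod>k<m. (real N - real k))"
  define A where "A Y = {\<phi> \<in> {0..<m} \<rightarrow>\<^sub>E {0..<N}. inj_on \<phi> {0..<m} \<and> (\<forall>f\<in>E. \<phi> ` f \<in> Y)}" for Y
  define Bf where "Bf f = {\<phi> \<in> {0..<m} \<rightarrow>\<^sub>E {0..<N}. inj_on \<phi> {0..<m} \<and> \<phi> ` f = e}" for f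
  obtain u v where uv: "u < N" "v < N" "u \<noteq> v" "e = {u,v}" using e by (auto simp: pairs_def)
  have N2: "N \<ge> 2" using uv by linarith
  have hd: "hom_density m E N Y = real (card (A Y)) / P" for Y
    by (simp add: hom_density_def inj_hom_count_def A_def P_def)
  have finA: "finite (A Y)" for Y
    unfolding A_def by (auto intro: finite_subset[OF _ finite_PiE[of "{0..<m}" "\<lambda>_. {0..<N}"]])
  have sub: "A (X - {e}) \<subseteq> A (insert e X)" by (auto simp: A_def)
  have P0: "P \<ge> 0" unfolding P_def by (rule prod_nonneg_or_zero)
  show ?thesis
  proof (cases "P = 0")
    case True
    then show ?thesis by (simp add: hd)
  next
    case False
    then have Ppos: "P > 0" using P0 by simp
    have diff: "real (card (A (insert e X))) - real (card (A (X - {e}))) = real (card (A (insert e X) - A (X - {e})))"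
      using card_Diff_subset[OF finA sub] card_mono[OF finA sub] by (simp add: of_nat_diff)
    have sub2: "A (insert e X) - A (X - {e}) \<subseteq> (\<Union>f\<in>E. Bf f)"
    proof
      fix \<phi> assume "\<phi> \<in> A (insert e X) - A (X - {e})"
      then show "\<phi> \<in> (\<Union>f\<in>E. Bf f)" unfolding A_def Bf_def by blast
    qed
    have finE: "finite E" using E finite_pairs finite_subset by blast
    have finB: "finite (Bf f)" for f
      unfolding Bf_def by (auto intro: finite_subset[OF _ finite_PiE[of "{0..<m}" "\<lambda>_. {0..<N}"]])
    have "card (A (insert e X) - A (X - {e})) \<le> card (\<Union>f\<in>E. Bf f)"
      using finE finB by (intro card_mono[OF _ sub2]) auto
    also have "\<dots> \<le> (\<Sum>f\<in>E. card (Bf f))" using finE by (rule card_UN_le)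
    finally have le1: "real (card (A (insert e X) - A (X - {e}))) \<le> (\<Sum>f\<in>E. real (card (Bf f)))"
      by (metis of_nat_le_iff of_nat_sum)
    have eq: "real N * (real N - 1) * (hom_density m E N (insert e X) - hom_density m E N (X - {e}))
       = real N * (real N - 1) * real (card (A (insert e X) - A (X - {e}))) / P"
      unfolding hd using diff by (simp add: diff_divide_distrib[symmetric])
    show ?thesis
    proof (cases "E = {}")
      case True
      then have "card (A (insert e X) - A (X - {e})) = 0" using le1 by simp
      then show ?thesis unfolding eq by simp
    next
      case False
      then obtain f0 where "f0 \<in> E" by blast
      then obtain a b where "a < m" "b < m" "a \<noteq> b" using E by (auto simp: pairs_def)
      then have m2: "m \<ge> 2" by linarith
      define R where "R = (\<Prod>k<m-2. (real N - 2 - real k))"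
      have mm: "m = Suc (Suc (m - 2))" using m2 by simp
      have PR: "P = real N * (real N - 1) * R"
        unfolding P_def R_def
        by (subst mm, simp only: prod.lessThan_Suc_shift) (simp add: algebra_simps)
      have Bb: "real (card (Bf f)) \<le> 2 * R" if "f \<in> E" for f
      proof -
        have "f \<in> pairs m" using that E by blast
        then obtain a b where ab: "a < m" "b < m" "a \<noteq> b" "f = {a,b}" unfolding pairs_def by blast
        show ?thesis unfolding Bf_def R_def ab(4) uv(4)
          using card_edge_le[OF m2 ab(1-3) uv(1-3)] .
      qed
      have "real (card (A (insert e X) - A (X - {e}))) \<le> (\<Sum>f\<in>E. 2 * R)"
        using le1 sum_mono[of E "\<lambda>f. real (card (Bf f))" "\<lambda>f. 2 * R", OF Bb] by linarith
      then have le2: "real (card (A (insert e X) - A (X - {e}))) \<le> real (card E) * (2 * R)" by simp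
      have NN: "real N * (real N - 1) > 0" using N2 by simp
      have "real N * (real N - 1) * real (card (A (insert e X) - A (X - {e}))) / P
          \<le> real N * (real N - 1) * (real (card E) * (2 * R)) / P"
        using le2 NN Ppos by (intro divide_right_mono mult_left_mono) auto
      also have "\<dots> = P * (2 * real (card E)) / P" unfolding PR by (simp add: algebra_simps)
      also have "\<dots> = 2 * real (card E)" using Ppos by simp
      finally show ?thesis unfolding eq using NN Ppos by simp
    qed
  qed
qed


theorem lemma26:
  fixes N l :: nat and m :: "nat \<Rightarrow> nat" and E :: "nat \<Rightarrow> nat set set"
    and \<beta> :: "nat \<Rightarrow> real" and X :: "nat set set" and e :: "nat set"
  assumes "\<And>i. i < l \<Longrightarrow> E i \<subseteq> pairs (m i)"
    and "X \<subseteq> pairs N"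
    and "e \<in> pairs N"
  shows "\<bar>disc_partial (subgraph_count_fun N l m E \<beta>) e X\<bar>
           \<le> (\<Sum>i<l. \<bar>\<beta> i\<bar> * real (card (E i)))"
proof -
  define D where "D i = real N * (real N - 1) * (hom_density (m i) (E i) N (insert e X) - hom_density (m i) (E i) N (X - {e}))" for i
  have Db: "0 \<le> D i \<and> D i \<le> 2 * real (card (E i))" if "i < l" for i
    unfolding D_def using graph_diff[OF assms(1)[OF that] assms(3)] .
  have eq: "disc_partial (subgraph_count_fun N l m E \<beta>) e X = (\<Sum>i<l. \<beta> i * D i) / 2"
    unfolding disc_partial_def subgraph_count_fun_def D_def
    by (simp add: sum_subtractf[symmetric] sum_distrib_left algebra_simps)
  have "\<bar>\<Sum>i<l. \<beta> i * D i\<bar> \<le> (\<Sum>i<l. \<bar>\<beta> i * D i\<bar>)" by (rule sum_abs)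
  also have "\<dots> \<le> (\<Sum>i<l. \<bar>\<beta> i\<bar> * (2 * real (card (E i))))"
  proof (rule sum_mono)
    fix i assume "i \<in> {..<l}"
    then have "0 \<le> D i \<and> D i \<le> 2 * real (card (E i))" using Db by simp
    then show "\<bar>\<beta> i * D i\<bar> \<le> \<bar>\<beta> i\<bar> * (2 * real (card (E i)))"
      by (simp add: abs_mult mult_left_mono)
  qed
  finally have "\<bar>\<Sum>i<l. \<beta> i * D i\<bar> \<le> 2 * (\<Sum>i<l. \<bar>\<beta> i\<bar> * real (card (E i)))"
    by (simp add: sum_distrib_left algebra_simps)
  then show ?thesis unfolding eq by simp
qed

end
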